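(* Let $\mathbb F\in\{\mathbb Q,\mathbb R,\mathbb C\}$. The $\mathsf p$-family $(\mathrm{HC}^2)=(\mathrm{HC}_n^2)_{n\in\mathbb N}$ lies in $\mathrm{VNPC}(\le_{\mathsf c})$, i.e. $(\mathrm{HC}^2)\in\mathrm{VNP}$ and $(\mathrm{HC})\le_{\mathsf c}(\mathrm{HC}^2)$.
   Context: A $\mathsf p$-family $(f)=(f_n)_{n\in\mathbb N}$ is a sequence of multivariate polynomials over $\mathbb F$ whose number of variables and degree are polynomially bounded in $n$. $f\le g$ (projection) means $f=g(\alpha_1,\dots,\alpha_M)$ with each $\alpha_i$ a variable of $f$ or a field constant; $(f)\le_{\mathsf p}(g)$ if $f_n\le g_{t(n)}$ for all $n$ for some polynomially bounded $t$. The oracle complexity $L^g(f)$ is the minimum size of an algebraic circuit with $+$, $\times$ and $g$-oracle gates (outputting $g$ evaluated at its inputs) computing $f$; $(f)\le_{\mathsf c}(g)$ if $L^{g_{t(n)}}(f_n)$ is polynomially bounded for some polynomially bounded $t$. $\mathrm{HC}_n=\sum_{\pi}\prod_{i=1}^n x_{i,\pi(i)}$, summing over permutations $\pi$ of $\{1,\dots,n\}$ that are $n$-cycles. $\mathrm{VNP}$ is the set of $\mathsf p$-families $(f)$ with $(f)\le_{\mathsf p}(\mathrm{HC})$, and $\mathrm{VNPC}(\le_{\mathsf c})=\{(f)\in\mathrm{VNP}:(\mathrm{HC})\le_{\mathsf c}(f)\}$. *)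

theory Defs
  imports Complex_Main "HOL-Combinatorics.Permutations"
begin

text \<open>Polynomials over an infinite field (Q, R, C) are represented by the polynomial
functions they induce; variables are indexed by nat.\<close>

type_synonym 'a pfun = "(nat \<Rightarrow> 'a) \<Rightarrow> 'a"

datatype 'a pexpr = PVar nat | PConst 'a | PAdd "'a pexpr" "'a pexpr" | PMul "'a pexpr" "'a pexpr"

fun peval :: "'a::comm_ring_1 pexpr \<Rightarrow> (nat \<Rightarrow> 'a) \<Rightarrow> 'a" where
  "peval (PVar i) x = x i"
| "peval (PConst c) x = c"
| "peval (PAdd p q) x = peval p x + peval q x"
| "peval (PMul p q) x = peval p x * peval q x"

fun pdeg :: "'a pexpr \<Rightarrow> nat" where
  "pdeg (PVar i) = 1"
| "pdeg (PConst c) = 0"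
| "pdeg (PAdd p q) = max (pdeg p) (pdeg q)"
| "pdeg (PMul p q) = pdeg p + pdeg q"

fun pvars :: "'a pexpr \<Rightarrow> nat set" where
  "pvars (PVar i) = {i}"
| "pvars (PConst c) = {}"
| "pvars (PAdd p q) = pvars p \<union> pvars q"
| "pvars (PMul p q) = pvars p \<union> pvars q"

definition is_poly :: "nat \<Rightarrow> nat \<Rightarrow> 'a::comm_ring_1 pfun \<Rightarrow> bool" where
  "is_poly N d f \<longleftrightarrow> (\<exists>e. pvars e \<subseteq> {..<N} \<and> pdeg e \<le> d \<and> (\<forall>x. peval e x = f x))"

definition poly_bounded :: "(nat \<Rightarrow> nat) \<Rightarrow> bool" where
  "poly_bounded t \<longleftrightarrow> (\<exists>c. \<forall>n. t n \<le> (n + 1) ^ c)"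

definition p_family :: "(nat \<Rightarrow> 'a::comm_ring_1 pfun) \<Rightarrow> bool" where
  "p_family f \<longleftrightarrow> (\<exists>N d. poly_bounded N \<and> poly_bounded d \<and> (\<forall>n. is_poly (N n) (d n) (f n)))"

definition proj_le :: "'a pfun \<Rightarrow> 'a pfun \<Rightarrow> bool" where
  "proj_le f g \<longleftrightarrow> (\<exists>\<sigma> :: nat \<Rightarrow> nat + 'a.
      \<forall>x. f x = g (\<lambda>i. case \<sigma> i of Inl j \<Rightarrow> x j | Inr c \<Rightarrow> c))"

definition p_reduces :: "(nat \<Rightarrow> 'a pfun) \<Rightarrow> (nat \<Rightarrow> 'a pfun) \<Rightarrow> bool" where
  "p_reduces f g \<longleftrightarrow> (\<exists>t. poly_bounded t \<and> (\<forall>n. proj_le (f n) (g (t n))))"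

definition is_ncycle :: "nat \<Rightarrow> (nat \<Rightarrow> nat) \<Rightarrow> bool" where
  "is_ncycle n \<pi> \<longleftrightarrow> (\<forall>i<n. \<forall>j<n. \<exists>k. (\<pi> ^^ k) i = j)"

text \<open>Variable x_{i,j} (0-based i,j < n) is x (i*n + j).\<close>
definition HC :: "nat \<Rightarrow> 'a::comm_ring_1 pfun" where
  "HC n x = (\<Sum>\<pi>\<in>{\<pi>. \<pi> permutes {..<n} \<and> is_ncycle n \<pi>}. \<Prod>i<n. x (i * n + \<pi> i))"

definition HCsq :: "nat \<Rightarrow> 'a::comm_ring_1 pfun" where
  "HCsq n x = (HC n x) ^ 2"

definition VNP :: "(nat \<Rightarrow> 'a::comm_ring_1 pfun) set" where
  "VNP = {f. p_family f \<and> p_reduces f HC}"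

text \<open>Oracle circuits as straight-line programs; gate k may only refer to gates < k.
  An oracle gate feeds its listed gates to the oracle's variables 0,1,...
  (remaining variables get 0). The output is the last gate; size = number of gates.\<close>
datatype 'a gate = GVar nat | GConst 'a | GAdd nat nat | GMul nat nat | GOracle "nat list"

fun gate_refs :: "'a gate \<Rightarrow> nat set" where
  "gate_refs (GVar j) = {}"
| "gate_refs (GConst c) = {}"
| "gate_refs (GAdd i j) = {i, j}"
| "gate_refs (GMul i j) = {i, j}"
| "gate_refs (GOracle as) = set as"

fun gate_val :: "'a::comm_ring_1 pfun \<Rightarrow> (nat \<Rightarrow> 'a) \<Rightarrow> 'a list \<Rightarrow> 'a gate \<Rightarrow> 'a" where
  "gate_val g x vs (GVar j) = x j"
| "gate_val g x vs (GConst c) = c"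
| "gate_val g x vs (GAdd i j) = vs ! i + vs ! j"
| "gate_val g x vs (GMul i j) = vs ! i * vs ! j"
| "gate_val g x vs (GOracle as) = g (\<lambda>k. if k < length as then vs ! (as ! k) else 0)"

definition prog_vals :: "'a::comm_ring_1 pfun \<Rightarrow> (nat \<Rightarrow> 'a) \<Rightarrow> 'a gate list \<Rightarrow> 'a list" where
  "prog_vals g x prog = foldl (\<lambda>vs gt. vs @ [gate_val g x vs gt]) [] prog"

definition wf_prog :: "'a gate list \<Rightarrow> bool" where
  "wf_prog prog \<longleftrightarrow> (\<forall>k<length prog. gate_refs (prog ! k) \<subseteq> {..<k})"

definition oracle_cost_le :: "'a::comm_ring_1 pfun \<Rightarrow> 'a pfun \<Rightarrow> nat \<Rightarrow> bool" where
  "oracle_cost_le g f s \<longleftrightarrow> (\<exists>prog. prog \<noteq> [] \<and> wf_prog prog \<and> length prog \<le> s \<and>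
      (\<forall>x. last (prog_vals g x prog) = f x))"

definition c_reduces :: "(nat \<Rightarrow> 'a::comm_ring_1 pfun) \<Rightarrow> (nat \<Rightarrow> 'a pfun) \<Rightarrow> bool" where
  "c_reduces f g \<longleftrightarrow> (\<exists>t q. poly_bounded t \<and> poly_bounded q \<and>
      (\<forall>n. oracle_cost_le (g (t n)) (f n) (q n)))"

definition VNPC_c :: "(nat \<Rightarrow> 'a::comm_ring_1 pfun) set" where
  "VNPC_c = {f \<in> VNP. c_reduces HC f}"

end

theory Submission
  imports Defs "HOL-Computational_Algebra.Polynomial"
begin


lemma mk_perm:
  assumes "finite A" "\<And>x. x \<in> A \<Longrightarrow> f x \<in> A" "inj_on f A" "\<And>x. x \<notin> A \<Longrightarrow> f x = x"
  shows "f permutes A"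
proof (rule bij_imp_permutes)
  have "f ` A \<subseteq> A" using assms(2) by auto
  then have "f ` A = A" using assms(1,3) by (simp add: endo_inj_surj)
  then show "bij_betw f A A" using assms(3) by (simp add: bij_betw_def)
qed (use assms in auto)

lemma funpow_in:
  assumes "\<And>a. a \<in> T \<Longrightarrow> \<pi> a \<in> T" "i \<in> T"
  shows "(\<pi> ^^ k) i \<in> T"
  by (induction k) (use assms in auto)

lemma ncycle_closed:
  assumes "\<pi> permutes {..<m}"
  shows "is_ncycle m \<pi> \<longleftrightarrow> (\<forall>T. T \<subseteq> {..<m} \<and> T \<noteq> {} \<and> (\<forall>a\<in>T. \<pi> a \<in> T) \<longrightarrow> {..<m} \<subseteq> T)"
proof
  assume c: "is_ncycle m \<pi>"
  show "\<forall>T. T \<subseteq> {..<m} \<and> T \<noteq> {} \<and> (\<forall>a\<in>T. \<pi> a \<in> T) \<longrightarrow> {..<m} \<subseteq> T"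
  proof (intro allI impI subsetI)
    fix T j assume T: "T \<subseteq> {..<m} \<and> T \<noteq> {} \<and> (\<forall>a\<in>T. \<pi> a \<in> T)" and j: "j \<in> {..<m}"
    then obtain i where i: "i \<in> T" by auto
    with T have "i < m" by auto
    with c j obtain k where "(\<pi> ^^ k) i = j" unfolding is_ncycle_def by auto
    moreover have "(\<pi> ^^ k) i \<in> T" using funpow_in[of T \<pi> i k] T i by auto
    ultimately show "j \<in> T" by simp
  qed
next
  assume H: "\<forall>T. T \<subseteq> {..<m} \<and> T \<noteq> {} \<and> (\<forall>a\<in>T. \<pi> a \<in> T) \<longrightarrow> {..<m} \<subseteq> T"
  show "is_ncycle m \<pi>" unfolding is_ncycle_def
  proof (intro allI impI)
    fix i j assume i: "i < m" and j: "j < m"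
    let ?T = "{(\<pi> ^^ k) i |k. True}"
    have cl: "\<And>a. a \<in> {..<m} \<Longrightarrow> \<pi> a \<in> {..<m}" using permutes_in_image[OF assms] by blast
    have "?T \<subseteq> {..<m}" using funpow_in[of "{..<m}" \<pi> i] cl i by auto
    moreover have "?T \<noteq> {}" by auto
    moreover have "\<forall>a\<in>?T. \<pi> a \<in> ?T"
    proof
      fix a assume "a \<in> ?T"
      then obtain k where "a = (\<pi> ^^ k) i" by auto
      then have "\<pi> a = (\<pi> ^^ Suc k) i" by simp
      then show "\<pi> a \<in> ?T" by blast
    qed
    ultimately have "{..<m} \<subseteq> ?T" using H by blast
    with j show "\<exists>k. (\<pi> ^^ k) i = j" by auto
  qed
qed



definition Cn :: "nat \<Rightarrow> (nat \<Rightarrow> nat) set" where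
  "Cn m = {\<pi>. \<pi> permutes {..<m} \<and> is_ncycle m \<pi>}"

definition gPhi :: "nat \<Rightarrow> (nat \<Rightarrow> nat) \<Rightarrow> (nat \<Rightarrow> nat) \<Rightarrow> nat \<Rightarrow> nat" where
  "gPhi n p1 p2 a = (if a < n then (if p1 a = 0 then n else p1 a)
     else if a < 2*n then (if p2 (a-n) = 0 then 0 else p2 (a-n) + n) else a)"

definition gPsi1 :: "nat \<Rightarrow> (nat \<Rightarrow> nat) \<Rightarrow> nat \<Rightarrow> nat" where
  "gPsi1 n p a = (if a < n then (if p a = n then 0 else p a) else a)"

definition gPsi2 :: "nat \<Rightarrow> (nat \<Rightarrow> nat) \<Rightarrow> nat \<Rightarrow> nat" where
  "gPsi2 n p b = (if b < n then (if p (b+n) = 0 then 0 else p (b+n) - n) else b)"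

definition gvalid :: "nat \<Rightarrow> nat \<Rightarrow> nat \<Rightarrow> bool" where
  "gvalid n a b \<longleftrightarrow> (a < n \<and> ((b < n \<and> b \<noteq> 0) \<or> b = n)) \<or> (n \<le> a \<and> a < 2*n \<and> ((n < b \<and> b < 2*n) \<or> b = 0))"

lemma perm_lt: "p permutes {..<m} \<Longrightarrow> a < m \<Longrightarrow> p a < m"
  using permutes_in_image[of p "{..<m}" a] by simp

lemma perm_inj: "p permutes {..<m} \<Longrightarrow> p a = p b \<Longrightarrow> a = b"
  using permutes_inj[of p "{..<m}"] by (simp add: inj_eq)

lemma perm_out: "p permutes {..<m} \<Longrightarrow> \<not> a < m \<Longrightarrow> p a = a"
  using permutes_not_in[of p "{..<m}" a] by simp

lemma perm_hits: "p permutes {..<m} \<Longrightarrow> c < m \<Longrightarrow> \<exists>b<m. p b = c"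
  using permutes_image[of p "{..<m}"] by (metis imageE lessThan_iff)

lemma Phi_perm:
  assumes p1: "p1 permutes {..<n}" and p2: "p2 permutes {..<n}" and n: "0 < n"
  shows "gPhi n p1 p2 permutes {..<2*n}"
proof (rule mk_perm)
  show "finite {..<2*n}" by simp
  show "gPhi n p1 p2 x \<in> {..<2 * n}" if "x \<in> {..<2 * n}" for x
    using that perm_lt[OF p1, of x] perm_lt[OF p2, of "x-n"] by (auto simp: gPhi_def)
  show "gPhi n p1 p2 x = x" if "x \<notin> {..<2 * n}" for x
    using that by (auto simp: gPhi_def)
  show "inj_on (gPhi n p1 p2) {..<2 * n}"
  proof (rule inj_onI)
    fix a b assume a: "a \<in> {..<2*n}" and b: "b \<in> {..<2*n}" and e: "gPhi n p1 p2 a = gPhi n p1 p2 b"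
    show "a = b"
    proof (cases "a < n")
      case True
      note A = True
      show ?thesis
      proof (cases "b < n")
        case True
        then show ?thesis using A e perm_lt[OF p1, of a] perm_lt[OF p1, of b] perm_inj[OF p1, of a b]
          by (auto simp: gPhi_def split: if_splits)
      next
        case False
        then show ?thesis using A b e perm_lt[OF p1, of a] perm_lt[OF p2, of "b-n"]
          by (auto simp: gPhi_def split: if_splits)
      qed
    next
      case False
      note A = False
      show ?thesis
      proof (cases "b < n")
        case True
        then show ?thesis using A a e perm_lt[OF p1, of b] perm_lt[OF p2, of "a-n"]
          by (auto simp: gPhi_def split: if_splits)
      next
        case False
        then show ?thesis using A a b e perm_inj[OF p2, of "a-n" "b-n"]
          by (auto simp: gPhi_def split: if_splits)
      qed
    qed
  qed
qed



lemma Phi_cycle: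
  assumes p1: "p1 permutes {..<n}" and p2: "p2 permutes {..<n}" and n: "0 < n"
    and c1: "is_ncycle n p1" and c2: "is_ncycle n p2"
  shows "is_ncycle (2*n) (gPhi n p1 p2)"
proof -
  let ?P = "gPhi n p1 p2"
  have C1: "\<And>T. T \<subseteq> {..<n} \<Longrightarrow> T \<noteq> {} \<Longrightarrow> (\<forall>a\<in>T. p1 a \<in> T) \<Longrightarrow> {..<n} \<subseteq> T"
    using c1 ncycle_closed[OF p1] by blast
  have C2: "\<And>T. T \<subseteq> {..<n} \<Longrightarrow> T \<noteq> {} \<Longrightarrow> (\<forall>a\<in>T. p2 a \<in> T) \<Longrightarrow> {..<n} \<subseteq> T"
    using c2 ncycle_closed[OF p2] by blast
  obtain b1 where b1: "b1 < n" "p1 b1 = 0" using perm_hits[OF p1 n] by blast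
  obtain b2 where b2: "b2 < n" "p2 b2 = 0" using perm_hits[OF p2 n] by blast
  show ?thesis unfolding ncycle_closed[OF Phi_perm[OF p1 p2 n]]
  proof (intro allI impI)
    fix T assume T: "T \<subseteq> {..<2*n} \<and> T \<noteq> {} \<and> (\<forall>a\<in>T. ?P a \<in> T)"
    have cl: "\<And>a. a \<in> T \<Longrightarrow> ?P a \<in> T" using T by blast
    have cl1: "{..<n} \<subseteq> T" if z: "0 \<in> T"
    proof -
      have "{..<n} \<subseteq> T \<inter> {..<n}"
      proof (rule C1)
        show "\<forall>a\<in>T \<inter> {..<n}. p1 a \<in> T \<inter> {..<n}"
        proof
          fix a assume a: "a \<in> T \<inter> {..<n}"
          then have "?P a \<in> T" using cl by blast
          then show "p1 a \<in> T \<inter> {..<n}" using a z perm_lt[OF p1, of a] by (auto simp: gPhi_def split: if_splits)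
        qed
      qed (use z n in auto)
      then show ?thesis by blast
    qed
    have cl2: "{n..<2*n} \<subseteq> T" if z: "n \<in> T"
    proof -
      have "{..<n} \<subseteq> {b. b < n \<and> b + n \<in> T}"
      proof (rule C2)
        show "\<forall>a\<in>{b. b < n \<and> b + n \<in> T}. p2 a \<in> {b. b < n \<and> b + n \<in> T}"
        proof
          fix a assume a: "a \<in> {b. b < n \<and> b + n \<in> T}"
          then have "?P (a+n) \<in> T" using cl by blast
          then show "p2 a \<in> {b. b < n \<and> b + n \<in> T}" using a z perm_lt[OF p2, of a]
            by (auto simp: gPhi_def split: if_splits)
        qed
      qed (use z n in auto)
      then show ?thesis
      proof -
        assume H: "{..<n} \<subseteq> {b. b < n \<and> b + n \<in> T}"
        show ?thesis
        proof
          fix c assume "c \<in> {n..<2*n}"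
          then have "c - n < n" "c - n + n = c" by auto
          then show "c \<in> T" using H by (metis (mono_tags, lifting) lessThan_iff mem_Collect_eq subsetD)
        qed
      qed
    qed
    have n_to_0: "0 \<in> T" if "n \<in> T"
    proof -
      have "?P (b2 + n) = 0" using b2 by (simp add: gPhi_def)
      moreover have "b2 + n \<in> T" using cl2[OF that] b2 by auto
      ultimately show ?thesis using cl by metis
    qed
    have z_to_n: "n \<in> T" if "0 \<in> T"
    proof -
      have "?P b1 = n" using b1 by (simp add: gPhi_def)
      moreover have "b1 \<in> T" using cl1[OF that] b1 by auto
      ultimately show ?thesis using cl by metis
    qed
    have z0: "0 \<in> T"
    proof -
      obtain a where a: "a \<in> T" using T by blast
      show ?thesis
      proof (cases "a < n")
        case True
        show ?thesis
        proof (cases "n \<in> T")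
          case True
          then show ?thesis using n_to_0 by blast
        next
          case False
          have "{..<n} \<subseteq> T \<inter> {..<n}"
          proof (rule C1)
            show "\<forall>a\<in>T \<inter> {..<n}. p1 a \<in> T \<inter> {..<n}"
            proof
              fix a assume a: "a \<in> T \<inter> {..<n}"
              then have "?P a \<in> T" using cl by blast
              then show "p1 a \<in> T \<inter> {..<n}" using a False perm_lt[OF p1, of a]
                by (auto simp: gPhi_def split: if_splits)
            qed
          qed (use a True in auto)
          then show ?thesis using n by blast
        qed
      next
        case False
        have a2: "a < 2*n" using a T by auto
        show ?thesis
        proof (rule ccontr)
          assume nz: "0 \<notin> T"
          have "{..<n} \<subseteq> {b. b < n \<and> b + n \<in> T}"
          proof (rule C2)
            show "\<forall>a\<in>{b. b < n \<and> b + n \<in> T}. p2 a \<in> {b. b < n \<and> b + n \<in> T}"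
            proof
              fix a assume a: "a \<in> {b. b < n \<and> b + n \<in> T}"
              then have "?P (a+n) \<in> T" using cl by blast
              then show "p2 a \<in> {b. b < n \<and> b + n \<in> T}" using a nz perm_lt[OF p2, of a]
                by (auto simp: gPhi_def split: if_splits)
            qed
            show "{b. b < n \<and> b + n \<in> T} \<noteq> {}" using a False a2
              by (auto intro!: exI[of _ "a-n"])
          qed auto
          then have "n \<in> T" using n by auto
          then show False using n_to_0 nz by blast
        qed
      qed
    qed
    have "{..<n} \<subseteq> T" "{n..<2*n} \<subseteq> T" using cl1 cl2 z0 z_to_n by auto
    then show "{..<2*n} \<subseteq> T" by (metis ivl_disj_un_one(2) le_add1 mult_2 sup.boundedI)
  qed
qed



context
  fixes n :: nat and p :: "nat \<Rightarrow> nat"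
  assumes p: "p permutes {..<2*n}" and pc: "is_ncycle (2*n) p" and n: "0 < n"
    and v: "\<And>a. a < 2*n \<Longrightarrow> gvalid n a (p a)"
begin

lemma v1: "a < n \<Longrightarrow> (0 < p a \<and> p a < n) \<or> p a = n"
  using v[of a] by (auto simp: gvalid_def)

lemma v2: "n \<le> a \<Longrightarrow> a < 2*n \<Longrightarrow> (n < p a \<and> p a < 2*n) \<or> p a = 0"
  using v[of a] by (auto simp: gvalid_def)

lemma Psi1_perm: "gPsi1 n p permutes {..<n}"
proof (rule mk_perm)
  show "gPsi1 n p x \<in> {..<n}" if "x \<in> {..<n}" for x
    using that v1[of x] by (auto simp: gPsi1_def)
  show "inj_on (gPsi1 n p) {..<n}"
  proof (rule inj_onI)
    fix a b assume a: "a \<in> {..<n}" and b: "b \<in> {..<n}" and e: "gPsi1 n p a = gPsi1 n p b"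
    then show "a = b" using v1[of a] v1[of b] perm_inj[OF p, of a b]
      by (auto simp: gPsi1_def split: if_splits)
  qed
qed (auto simp: gPsi1_def)

lemma Psi2_perm: "gPsi2 n p permutes {..<n}"
proof (rule mk_perm)
  show "gPsi2 n p x \<in> {..<n}" if "x \<in> {..<n}" for x
    using that v2[of "x+n"] by (auto simp: gPsi2_def)
  show "inj_on (gPsi2 n p) {..<n}"
  proof (rule inj_onI)
    fix a b assume a: "a \<in> {..<n}" and b: "b \<in> {..<n}" and e: "gPsi2 n p a = gPsi2 n p b"
    then have "p (a+n) = p (b+n)" using v2[of "a+n"] v2[of "b+n"]
      by (auto simp: gPsi2_def split: if_splits)
    then show "a = b" using perm_inj[OF p, of "a+n" "b+n"] by simp
  qed
qed (auto simp: gPsi2_def)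

lemma Cl: "T \<subseteq> {..<2*n} \<Longrightarrow> T \<noteq> {} \<Longrightarrow> (\<forall>a\<in>T. p a \<in> T) \<Longrightarrow> {..<2*n} \<subseteq> T"
  using pc ncycle_closed[OF p] by blast

lemma Psi1_cycle: "is_ncycle n (gPsi1 n p)"
  unfolding ncycle_closed[OF Psi1_perm]
proof (intro allI impI)
  fix T assume T: "T \<subseteq> {..<n} \<and> T \<noteq> {} \<and> (\<forall>a\<in>T. gPsi1 n p a \<in> T)"
  let ?S = "T \<union> (if 0 \<in> T then {n..<2*n} else {})"
  have "{..<2*n} \<subseteq> ?S"
  proof (rule Cl)
    show "?S \<subseteq> {..<2*n}" using T by auto
    show "?S \<noteq> {}" using T by auto
    show "\<forall>a\<in>?S. p a \<in> ?S"
    proof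
      fix a assume a: "a \<in> ?S"
      show "p a \<in> ?S"
      proof (cases "a \<in> T")
        case True
        then have an: "a < n" using T by auto
        have "gPsi1 n p a \<in> T" using T True by blast
        then show ?thesis using v1[OF an] an by (auto simp: gPsi1_def split: if_splits)
      next
        case False
        then have "0 \<in> T" "n \<le> a" "a < 2*n" using a by (auto split: if_splits)
        then show ?thesis using v2[of a] by auto
      qed
    qed
  qed
  show "{..<n} \<subseteq> T"
  proof
    fix b assume b: "b \<in> {..<n}"
    then have "b < 2*n" by auto
    then have "b \<in> ?S" using subsetD[OF \<open>{..<2*n} \<subseteq> ?S\<close>, of b] by simp
    then show "b \<in> T" using b by (cases "0 \<in> T") auto
  qed
qed

lemma Psi2_cycle: "is_ncycle n (gPsi2 n p)"
  unfolding ncycle_closed[OF Psi2_perm]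
proof (intro allI impI)
  fix T assume T: "T \<subseteq> {..<n} \<and> T \<noteq> {} \<and> (\<forall>a\<in>T. gPsi2 n p a \<in> T)"
  let ?S = "(\<lambda>b. b + n) ` T \<union> (if 0 \<in> T then {..<n} else {})"
  have "{..<2*n} \<subseteq> ?S"
  proof (rule Cl)
    show "?S \<subseteq> {..<2*n}" using T by auto
    show "?S \<noteq> {}" using T by auto
    show "\<forall>a\<in>?S. p a \<in> ?S"
    proof
      fix a assume a: "a \<in> ?S"
      show "p a \<in> ?S"
      proof (cases "a \<in> (\<lambda>b. b + n) ` T")
        case True
        then obtain b where b: "b \<in> T" "a = b + n" by auto
        then have bn: "b < n" using T by auto
        have g: "gPsi2 n p b \<in> T" using T b by blast
        show ?thesis
        proof (cases "p (b+n) = 0")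
          case True
          then have "0 \<in> T" using g bn by (simp add: gPsi2_def)
          then show ?thesis using True b n by auto
        next
          case False
          then have "n < p (b+n)" using v2[of "b+n"] bn by auto
          then have "p (b+n) = gPsi2 n p b + n" using bn False by (simp add: gPsi2_def)
          then show ?thesis using g b by auto
        qed
      next
        case False
        then have z: "0 \<in> T" and an: "a < n" using a by (auto split: if_splits)
        from v1[OF an] show ?thesis
        proof
          assume "0 < p a \<and> p a < n" then show ?thesis using z by auto
        next
          assume "p a = n" then show ?thesis using z by force
        qed
      qed
    qed
  qed
  show "{..<n} \<subseteq> T"
  proof
    fix b assume "b \<in> {..<n}"
    then have "b + n < 2*n" by auto
    then have bn: "b + n \<in> ?S" using subsetD[OF \<open>{..<2*n} \<subseteq> ?S\<close>, of "b+n"] by simp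
    then have "b + n \<in> (\<lambda>b. b + n) ` T" by (cases "0 \<in> T") auto
    then show "b \<in> T" by auto
  qed
qed

lemma Phi_Psi: "gPhi n (gPsi1 n p) (gPsi2 n p) = p"
proof
  fix a show "gPhi n (gPsi1 n p) (gPsi2 n p) a = p a"
  proof (cases "a < n")
    case True then show ?thesis using v1[OF True] by (auto simp: gPhi_def gPsi1_def)
  next
    case False
    show ?thesis
    proof (cases "a < 2*n")
      case True then show ?thesis using v2[of a] False by (auto simp: gPhi_def gPsi2_def)
    next
      case F2: False then show ?thesis using False perm_out[OF p F2] by (auto simp: gPhi_def)
    qed
  qed
qed

end

lemma Psi_Phi:
  assumes p1: "p1 permutes {..<n}" and p2: "p2 permutes {..<n}" and n: "0 < n"
  shows "gPsi1 n (gPhi n p1 p2) = p1" "gPsi2 n (gPhi n p1 p2) = p2"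
proof -
  show "gPsi1 n (gPhi n p1 p2) = p1"
  proof
    fix a show "gPsi1 n (gPhi n p1 p2) a = p1 a"
      using perm_lt[OF p1, of a] perm_out[OF p1, of a] by (auto simp: gPsi1_def gPhi_def)
  qed
  show "gPsi2 n (gPhi n p1 p2) = p2"
  proof
    fix a show "gPsi2 n (gPhi n p1 p2) a = p2 a"
      using perm_lt[OF p2, of a] perm_out[OF p2, of a] n by (auto simp: gPsi2_def gPhi_def)
  qed
qed

lemma Phi_valid:
  assumes p1: "p1 permutes {..<n}" and p2: "p2 permutes {..<n}" and n: "0 < n" and a: "a < 2*n"
  shows "gvalid n a (gPhi n p1 p2 a)"
  using perm_lt[OF p1, of a] perm_lt[OF p2, of "a-n"] a n
  by (auto simp: gvalid_def gPhi_def)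



lemma prod_split2: "(\<Prod>a<2*(n::nat). f a) = (\<Prod>a<n. f a) * (\<Prod>b<n. f (b + n)) "
proof -
  have "(\<Prod>a<2*n. f a) = prod f {0..<2*n}" by (simp add: atLeast0LessThan)
  also have "\<dots> = prod f {0..<n} * prod f {n..<2*n}"
    by (rule prod.atLeastLessThan_concat[symmetric]) auto
  also have "prod f {n..<2*n} = prod f {0+n..<n+n}" by (simp add: mult_2)
  also have "\<dots> = (\<Prod>b\<in>{0..<n}. f (b + n))" by (rule prod.shift_bounds_nat_ivl)
  finally show ?thesis by (simp add: atLeast0LessThan)
qed

definition gtarget :: "nat \<Rightarrow> nat \<Rightarrow> nat \<Rightarrow> nat" where
  "gtarget n a b = (if a < n then a*n + (if b = n then 0 else b) else (a-n)*n + (if b = 0 then 0 else b - n))"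

definition gsig :: "nat \<Rightarrow> nat \<Rightarrow> nat + 'a::zero" where
  "gsig n i = (if gvalid n (i div (2*n)) (i mod (2*n)) then Inl (gtarget n (i div (2*n)) (i mod (2*n))) else Inr 0)"

lemma Cn_finite: "finite (Cn m)"
  by (rule finite_subset[OF _ finite_permutations[of "{..<m}"]]) (auto simp: Cn_def)

lemma HC_Cn: "HC n x = (\<Sum>\<pi>\<in>Cn n. \<Prod>i<n. x (i * n + \<pi> i))"
  by (simp add: HC_def Cn_def)

lemma glue:
  fixes x :: "nat \<Rightarrow> 'a::comm_ring_1"
  assumes n: "0 < n"
  shows "HC (2*n) (\<lambda>i. case gsig n i of Inl j \<Rightarrow> x j | Inr c \<Rightarrow> c) = HC n x * HC n x"
proof -
  define ew where "ew a b = (if gvalid n a b then x (gtarget n a b) else 0)" for a b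
  define F where "F \<pi> = (\<Prod>a<2*n. ew a (\<pi> a))" for \<pi>
  define wt where "wt \<pi> = (\<Prod>i<n. x (i * n + \<pi> i))" for \<pi>
  define V where "V = {\<pi>. \<forall>a<2*n. gvalid n a (\<pi> a)}"
  have step1: "HC (2*n) (\<lambda>i. case gsig n i of Inl j \<Rightarrow> x j | Inr c \<Rightarrow> (c::'a)) = (\<Sum>\<pi>\<in>Cn (2*n). F \<pi>)"
    unfolding HC_Cn F_def
  proof (rule sum.cong[OF refl], rule prod.cong[OF refl])
    fix \<pi> a assume p: "\<pi> \<in> Cn (2*n)" and a: "a \<in> {..<2*n}"
    have pa: "\<pi> a < 2*n" using p a perm_lt[of \<pi> "2*n" a] by (auto simp: Cn_def)
    have d: "(a * (2*n) + \<pi> a) div (2*n) = a" "(a * (2*n) + \<pi> a) mod (2*n) = \<pi> a"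
      using pa by auto
    show "(case gsig n (a * (2 * n) + \<pi> a) of Inl j \<Rightarrow> x j | Inr c \<Rightarrow> c) = ew a (\<pi> a)"
      unfolding gsig_def ew_def d by simp
  qed
  have step2: "(\<Sum>\<pi>\<in>Cn (2*n). F \<pi>) = (\<Sum>\<pi>\<in>Cn (2*n) \<inter> V. F \<pi>)"
  proof (rule sum.mono_neutral_right)
    show "\<forall>i\<in>Cn (2 * n) - Cn (2 * n) \<inter> V. F i = 0"
    proof
      fix \<pi> assume "\<pi> \<in> Cn (2 * n) - Cn (2 * n) \<inter> V"
      then obtain a where a: "a < 2*n" "\<not> gvalid n a (\<pi> a)" by (auto simp: V_def)
      show "F \<pi> = 0" unfolding F_def
        by (rule prod_zero) (use a in \<open>auto simp: ew_def\<close>)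
    qed
  qed (auto simp: Cn_finite)
  have bij: "bij_betw (\<lambda>(p1,p2). gPhi n p1 p2) (Cn n \<times> Cn n) (Cn (2*n) \<inter> V)"
  proof (rule bij_betw_byWitness[where f'="\<lambda>p. (gPsi1 n p, gPsi2 n p)"])
    show "\<forall>a\<in>Cn n \<times> Cn n. (\<lambda>p. (gPsi1 n p, gPsi2 n p)) ((\<lambda>(p1, p2). gPhi n p1 p2) a) = a"
      using Psi_Phi n by (auto simp: Cn_def)
    show "\<forall>a'\<in>Cn (2 * n) \<inter> V. (\<lambda>(p1, p2). gPhi n p1 p2) ((\<lambda>p. (gPsi1 n p, gPsi2 n p)) a') = a'"
      using Phi_Psi n by (auto simp: Cn_def V_def)
    show "(\<lambda>(p1, p2). gPhi n p1 p2) ` (Cn n \<times> Cn n) \<subseteq> Cn (2 * n) \<inter> V"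
      using Phi_perm Phi_cycle Phi_valid n by (auto simp: Cn_def V_def)
    show "(\<lambda>p. (gPsi1 n p, gPsi2 n p)) ` (Cn (2 * n) \<inter> V) \<subseteq> Cn n \<times> Cn n"
      using Psi1_perm Psi2_perm Psi1_cycle Psi2_cycle n by (auto simp: Cn_def V_def)
  qed
  have step3: "(\<Sum>\<pi>\<in>Cn (2*n) \<inter> V. F \<pi>) = (\<Sum>(p1,p2)\<in>Cn n \<times> Cn n. F (gPhi n p1 p2))"
    using sum.reindex_bij_betw[OF bij, of F] by (simp add: case_prod_unfold)
  have step4: "F (gPhi n p1 p2) = wt p1 * wt p2" if p1: "p1 permutes {..<n}" and p2: "p2 permutes {..<n}" for p1 p2
  proof -
    have "F (gPhi n p1 p2) = (\<Prod>a<n. ew a (gPhi n p1 p2 a)) * (\<Prod>b<n. ew (b+n) (gPhi n p1 p2 (b+n)))"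
      unfolding F_def by (rule prod_split2)
    also have "(\<Prod>a<n. ew a (gPhi n p1 p2 a)) = wt p1" unfolding wt_def
    proof (rule prod.cong[OF refl])
      fix a assume a: "a \<in> {..<n}"
      show "ew a (gPhi n p1 p2 a) = x (a * n + p1 a)"
        using a perm_lt[OF p1, of a] n by (auto simp: ew_def gPhi_def gvalid_def gtarget_def)
    qed
    also have "(\<Prod>b<n. ew (b+n) (gPhi n p1 p2 (b+n))) = wt p2" unfolding wt_def
    proof (rule prod.cong[OF refl])
      fix a assume a: "a \<in> {..<n}"
      show "ew (a+n) (gPhi n p1 p2 (a+n)) = x (a * n + p2 a)"
        using a perm_lt[OF p2, of a] n by (auto simp: ew_def gPhi_def gvalid_def gtarget_def)
    qed
    finally show ?thesis .
  qed
  have step5: "(\<Sum>(p1,p2)\<in>Cn n \<times> Cn n. F (gPhi n p1 p2)) = (\<Sum>(p1,p2)\<in>Cn n \<times> Cn n. wt p1 * wt p2)"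
    by (rule sum.cong[OF refl]) (auto simp: Cn_def step4)
  have step6: "(\<Sum>(p1,p2)\<in>Cn n \<times> Cn n. wt p1 * wt p2) = HC n x * HC n x"
    unfolding HC_Cn wt_def[symmetric] sum_product sum.cartesian_product ..
  show ?thesis using step1 step2 step3 step5 step6 by simp
qed



lemma is_poly_var: "i < N \<Longrightarrow> 1 \<le> d \<Longrightarrow> is_poly N d (\<lambda>x. x i)"
  unfolding is_poly_def by (rule exI[of _ "PVar i"]) auto

lemma is_poly_const: "is_poly N d (\<lambda>x. c)"
  unfolding is_poly_def by (rule exI[of _ "PConst c"]) auto

lemma is_poly_add: "is_poly N d f \<Longrightarrow> is_poly N d g \<Longrightarrow> is_poly N d (\<lambda>x. f x + g x)"
  unfolding is_poly_def
proof (elim exE conjE)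
  fix e1 e2 assume "pvars e1 \<subseteq> {..<N}" "pdeg e1 \<le> d" "\<forall>x. peval e1 x = f x"
    "pvars e2 \<subseteq> {..<N}" "pdeg e2 \<le> d" "\<forall>x. peval e2 x = g x"
  then show "\<exists>e. pvars e \<subseteq> {..<N} \<and> pdeg e \<le> d \<and> (\<forall>x. peval e x = f x + g x)"
    by (intro exI[of _ "PAdd e1 e2"]) auto
qed

lemma is_poly_mul: "is_poly N d1 f \<Longrightarrow> is_poly N d2 g \<Longrightarrow> is_poly N (d1 + d2) (\<lambda>x. f x * g x)"
  unfolding is_poly_def
proof (elim exE conjE)
  fix e1 e2 assume "pvars e1 \<subseteq> {..<N}" "pdeg e1 \<le> d1" "\<forall>x. peval e1 x = f x"
    "pvars e2 \<subseteq> {..<N}" "pdeg e2 \<le> d2" "\<forall>x. peval e2 x = g x"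
  then show "\<exists>e. pvars e \<subseteq> {..<N} \<and> pdeg e \<le> d1 + d2 \<and> (\<forall>x. peval e x = f x * g x)"
    by (intro exI[of _ "PMul e1 e2"]) auto
qed

lemma is_poly_sum:
  assumes "\<And>a. a \<in> A \<Longrightarrow> is_poly N d (f a)"
  shows "is_poly N d (\<lambda>x. \<Sum>a\<in>A. f a x)"
proof (cases "finite A")
  case True
  then show ?thesis using assms
  proof (induction A rule: finite_induct)
    case empty then show ?case using is_poly_const[of N d 0] by simp
  next
    case (insert a A)
    then show ?case using is_poly_add[of N d "f a" "\<lambda>x. \<Sum>a\<in>A. f a x"] by simp
  qed
next
  case False then show ?thesis using is_poly_const[of N d 0] by simp
qed

lemma is_poly_prod:
  assumes "\<And>i. i < n \<Longrightarrow> is_poly N 1 (f i)"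
  shows "is_poly N n (\<lambda>x. \<Prod>i<n. f i x)"
  using assms
proof (induction n)
  case 0 then show ?case using is_poly_const[of N 0 1] by simp
next
  case (Suc n)
  then show ?case using is_poly_mul[of N n "\<lambda>x. \<Prod>i<n. f i x" 1 "f n"] by simp
qed

lemma HC_is_poly: "is_poly (n*n) n (HC n)"
proof -
  have "is_poly (n*n) n (\<lambda>x. \<Sum>\<pi>\<in>Cn n. \<Prod>i<n. x (i * n + \<pi> i))"
  proof (rule is_poly_sum, rule is_poly_prod, rule is_poly_var)
    fix \<pi> i assume p: "\<pi> \<in> Cn n" and i: "i < n"
    have "\<pi> i < n" using p i perm_lt[of \<pi> n i] by (auto simp: Cn_def)
    then have "i * n + \<pi> i < i * n + n" by simp
    also have "\<dots> = Suc i * n" by simp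
    also have "\<dots> \<le> n * n" using i by (intro mult_right_mono) auto
    finally show "i * n + \<pi> i < n * n" .
  qed auto
  then show ?thesis by (simp add: HC_Cn[abs_def])
qed

lemma HCsq_is_poly: "is_poly (n*n) (2*n) (HCsq n)"
  using is_poly_mul[OF HC_is_poly HC_is_poly, of n] by (simp add: HCsq_def[abs_def] power2_eq_square mult_2)

lemma HC_0: "HC 0 x = 1"
proof -
  have "Cn 0 = {id}" by (auto simp: Cn_def is_ncycle_def)
  then show ?thesis by (simp add: HC_Cn)
qed

lemma pb_lin: "poly_bounded (\<lambda>n. 2 * n)"
  unfolding poly_bounded_def by (rule exI[of _ 2]) (simp add: power2_eq_square algebra_simps)

lemma pb_sq: "poly_bounded (\<lambda>n. n * n)"
  unfolding poly_bounded_def by (rule exI[of _ 2]) (simp add: power2_eq_square algebra_simps)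

lemma HCsq_pfamily: "p_family (HCsq :: nat \<Rightarrow> 'a::comm_ring_1 pfun)"
  unfolding p_family_def using pb_lin pb_sq HCsq_is_poly by blast

lemma HCsq_preduces: "p_reduces (HCsq :: nat \<Rightarrow> 'a::comm_ring_1 pfun) HC"
  unfolding p_reduces_def
proof (intro exI conjI allI)
  show "poly_bounded (\<lambda>n. 2 * n)" by (rule pb_lin)
  fix n
  show "proj_le (HCsq n :: 'a pfun) (HC (2 * n))"
  proof (cases "n = 0")
    case True
    then show ?thesis unfolding proj_le_def by (auto simp: HCsq_def HC_0)
  next
    case False
    then show ?thesis unfolding proj_le_def
      by (intro exI[of _ "gsig n"]) (simp add: glue HCsq_def power2_eq_square)
  qed
qed



definition Ppoly :: "nat \<Rightarrow> (nat \<Rightarrow> 'a) \<Rightarrow> (nat \<Rightarrow> 'a) \<Rightarrow> 'a::comm_ring_1 poly" where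
  "Ppoly n u x = (\<Sum>\<pi>\<in>Cn n. \<Prod>i<n. [:u (i*n + \<pi> i), x (i*n + \<pi> i):])"

lemma poly_Ppoly: "poly (Ppoly n u x) s = HC n (\<lambda>k. u k + s * x k)"
  by (simp add: Ppoly_def HC_Cn poly_sum poly_prod)

lemma deg_prod_lin: "degree (\<Prod>i<n. [:a i, b i:]) \<le> n"
proof (induction n)
  case 0 then show ?case by simp
next
  case (Suc n)
  have "degree (\<Prod>i<Suc n. [:a i, b i:]) \<le> degree (\<Prod>i<n. [:a i, b i:]) + degree [:a n, b n:]"
    unfolding prod.lessThan_Suc by (rule degree_mult_le)
  also have "\<dots> \<le> n + 1" using Suc by (simp add: add_mono)
  finally show ?case by simp
qed

lemma coeff_prod_lin: "coeff (\<Prod>i<n. [:a i, b i:]) n = (\<Prod>i<n. b i)"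
proof (induction n)
  case 0 then show ?case by simp
next
  case (Suc n)
  let ?p = "\<Prod>i<n. [:a i, b i:]"
  have z: "coeff ?p (Suc n) = 0" using deg_prod_lin[of a b n] by (simp add: coeff_eq_0)
  have "(\<Prod>i<Suc n. [:a i, b i:]) = ?p * pCons (a n) [:b n:]" by simp
  also have "\<dots> = smult (a n) ?p + pCons 0 (smult (b n) ?p)" by simp
  finally show ?case using z Suc by (simp add: mult.commute)
qed

lemma deg_Ppoly: "degree (Ppoly n u x) \<le> n"
  unfolding Ppoly_def by (rule degree_sum_le) (auto simp: Cn_finite deg_prod_lin)

lemma coeff_Ppoly_n: "coeff (Ppoly n u x) n = HC n x"
  by (simp add: Ppoly_def coeff_sum coeff_prod_lin HC_Cn)

lemma coeff_Ppoly_0: "coeff (Ppoly n u x) 0 = HC n u"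
  by (simp flip: poly_0_coeff_0 add: poly_Ppoly)

definition u0 :: "nat \<Rightarrow> nat \<Rightarrow> 'a::comm_ring_1" where
  "u0 n k = (if k < n*n \<and> k mod n = Suc (k div n) mod n then 1 else 0)"

definition shf :: "nat \<Rightarrow> nat \<Rightarrow> nat" where
  "shf n i = (if i < n then Suc i mod n else i)"

lemma shf_perm: "shf n permutes {..<n}"
proof (rule mk_perm)
  show "inj_on (shf n) {..<n}"
  proof (rule inj_onI)
    fix i j assume i: "i \<in> {..<n}" and j: "j \<in> {..<n}" and e: "shf n i = shf n j"
    then have "Suc i mod n = Suc j mod n" by (simp add: shf_def)
    then show "i = j" using i j
      by (metis lessThan_iff Suc_lessI mod_less mod_self nat.inject nat.simps(3))
  qed
qed (auto simp: shf_def)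

lemma shf_pow: "i < n \<Longrightarrow> (shf n ^^ k) i = (i + k) mod n"
proof (induction k)
  case 0 then show ?case by simp
next
  case (Suc k)
  have "n > 0" using Suc by auto
  then show ?case using Suc by (simp add: shf_def mod_Suc_eq)
qed

lemma shf_cycle: "is_ncycle n (shf n)"
  unfolding is_ncycle_def
proof (intro allI impI)
  fix i j assume i: "i < n" and j: "j < n"
  have "(shf n ^^ (j + n - i)) i = (i + (j + n - i)) mod n" by (rule shf_pow[OF i])
  also have "\<dots> = (j + n) mod n" using i by simp
  also have "\<dots> = j" using j by simp
  finally show "\<exists>k. (shf n ^^ k) i = j" by blast
qed

lemma prod_ind: "(\<Prod>i<(n::nat). if P i then 1 else (0::'a::comm_ring_1)) = (if \<forall>i<n. P i then 1 else 0)"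
  by (induction n) (auto simp: less_Suc_eq)

lemma HC_u0: "HC n (u0 n) = (1::'a::comm_ring_1)"
proof -
  have "HC n (u0 n) = (\<Sum>\<pi>\<in>Cn n. (if \<pi> = shf n then 1 else 0 :: 'a))"
    unfolding HC_Cn
  proof (rule sum.cong[OF refl])
    fix \<pi> assume p: "\<pi> \<in> Cn n"
    have pp: "\<pi> permutes {..<n}" using p by (simp add: Cn_def)
    have f: "u0 n (i*n + \<pi> i) = (if \<pi> i = shf n i then 1 else (0::'a))" if i: "i < n" for i
    proof -
      have pi: "\<pi> i < n" using perm_lt[OF pp i] .
      have "i * n + \<pi> i < n * n"
      proof -
        have "i * n + \<pi> i < Suc i * n" using pi by simp
        also have "\<dots> \<le> n * n" using i by (intro mult_right_mono) auto
        finally show ?thesis .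
      qed
      moreover have "(i*n + \<pi> i) mod n = \<pi> i" "(i*n + \<pi> i) div n = i" using pi by auto
      ultimately show ?thesis using i by (simp add: u0_def shf_def)
    qed
    have "(\<Prod>i<n. u0 n (i*n + \<pi> i)) = (\<Prod>i<n. (if \<pi> i = shf n i then 1 else (0::'a)))"
      using f by (intro prod.cong) auto
    also have "\<dots> = (if \<forall>i<n. \<pi> i = shf n i then 1 else 0)"
      by (rule prod_ind)
    also have "(\<forall>i<n. \<pi> i = shf n i) \<longleftrightarrow> \<pi> = shf n"
    proof
      assume H: "\<forall>i<n. \<pi> i = shf n i"
      show "\<pi> = shf n"
      proof
        fix i show "\<pi> i = shf n i"
          using H perm_out[OF pp, of i] by (cases "i < n") (auto simp: shf_def)
      qed
    qed auto
    finally show "(\<Prod>i<n. u0 n (i*n + \<pi> i)) = (if \<pi> = shf n then 1 else (0::'a))" .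
  qed
  also have "\<dots> = 1"
  proof -
    have "shf n \<in> Cn n" using shf_perm shf_cycle by (simp add: Cn_def)
    then show ?thesis using sum.delta[OF Cn_finite[of n], of "shf n" "\<lambda>_. 1::'a"] by simp
  qed
  finally show ?thesis .
qed



definition lag :: "nat \<Rightarrow> nat \<Rightarrow> 'a::field_char_0 poly" where
  "lag D i = smult (inverse (\<Prod>j\<in>{..D}-{i}. (of_nat i - of_nat j))) (\<Prod>j\<in>{..D}-{i}. [:- of_nat j, 1:])"

lemma lag_deg: "i \<le> D \<Longrightarrow> degree (lag D i :: 'a::field_char_0 poly) \<le> D"
proof -
  assume i: "i \<le> D"
  have "degree (\<Prod>j\<in>{..D}-{i}. [:- of_nat j, 1::'a:]) \<le> sum (degree \<circ> (\<lambda>j. [:- of_nat j, 1::'a:])) ({..D}-{i})"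
    by (rule degree_prod_sum_le) simp
  also have "\<dots> = card ({..D}-{i})" by simp
  also have "\<dots> = D" using i by simp
  finally show ?thesis unfolding lag_def using degree_smult_le order_trans by blast
qed

lemma lag_poly: "i \<le> D \<Longrightarrow> m \<le> D \<Longrightarrow> poly (lag D i) (of_nat m :: 'a::field_char_0) = (if m = i then 1 else 0)"
proof -
  assume i: "i \<le> D" and m: "m \<le> D"
  have nz: "(\<Prod>j\<in>{..D}-{i}. (of_nat i - of_nat j :: 'a)) \<noteq> 0"
    by (subst prod_zero_iff) auto
  show ?thesis
  proof (cases "m = i")
    case True
    then show ?thesis using nz by (simp add: lag_def poly_prod)
  next
    case False
    have "(\<Prod>j\<in>{..D}-{i}. poly [:- of_nat j, 1:] (of_nat m :: 'a)) = 0"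
      by (rule prod_zero) (use m False in \<open>auto intro!: bexI[of _ m]\<close>)
    then show ?thesis using False by (simp add: lag_def poly_prod)
  qed
qed

lemma interp:
  fixes q :: "'a::field_char_0 poly"
  assumes "degree q \<le> D"
  shows "coeff q k = (\<Sum>i\<le>D. coeff (lag D i) k * poly q (of_nat i))"
proof -
  define r where "r = (\<Sum>i\<le>D. smult (poly q (of_nat i)) (lag D i))"
  have A: "card (of_nat ` {..D} :: 'a set) = Suc D"
    by (subst card_image) (auto simp: inj_on_def)
  have "q = r"
  proof (rule poly_eqI_degree[where A = "of_nat ` {..D}"])
    fix y assume "y \<in> (of_nat ` {..D} :: 'a set)"
    then obtain m where m: "m \<le> D" "y = of_nat m" by auto
    have "poly r y = (\<Sum>i\<le>D. poly q (of_nat i) * (if m = i then 1 else 0))"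
      unfolding r_def poly_sum using m by (intro sum.cong) (simp_all add: lag_poly)
    also have "\<dots> = (\<Sum>i\<le>D. if m = i then poly q (of_nat i) else 0)"
      by (intro sum.cong) auto
    also have "\<dots> = poly q y" using m by (simp add: sum.delta)
    finally show "poly q y = poly r y" by simp
  next
    show "degree q < card (of_nat ` {..D} :: 'a set)" using A assms by simp
    have "degree r \<le> D" unfolding r_def
      by (rule degree_sum_le) (auto intro: order_trans[OF degree_smult_le] lag_deg)
    then show "degree r < card (of_nat ` {..D} :: 'a set)" using A by simp
  qed
  then have "coeff q k = coeff r k" by (rule arg_cong)
  also have "\<dots> = (\<Sum>i\<le>D. coeff (lag D i) k * poly q (of_nat i))"
    unfolding r_def coeff_sum coeff_smult by (simp add: mult.commute)
  finally show ?thesis .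
qed

lemma sqrt_rec:
  fixes p :: "'a::field_char_0 poly"
  assumes p0: "coeff p 0 = 1" and k: "1 \<le> k"
  shows "coeff p k = (coeff (p * p) k - (\<Sum>i\<in>{1..<k}. coeff p i * coeff p (k - i))) / 2"
proof -
  have "{..k} = insert 0 (insert k {1..<k})" using k by auto
  then have "coeff (p * p) k = coeff p 0 * coeff p k + (coeff p k * coeff p 0 + (\<Sum>i\<in>{1..<k}. coeff p i * coeff p (k - i)))"
    unfolding coeff_mult using k by simp
  then show ?thesis using p0 by (simp add: field_simps)
qed



lemma gate_val_cong:
  assumes "\<forall>r\<in>gate_refs gt. vs ! r = ws ! r"
  shows "gate_val g x vs gt = gate_val g x ws gt"
  using assms by (cases gt) (auto intro!: arg_cong[where f=g])

lemma prog_vals_snoc: "prog_vals g x (xs @ [y]) = prog_vals g x xs @ [gate_val g x (prog_vals g x xs) y]"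
  by (simp add: prog_vals_def)

lemma prog_vals_take:
  assumes wf: "wf_prog prog"
    and loc: "\<forall>j<length prog. val j = gate_val g x (map val [0..<length prog]) (prog!j)"
  shows "j \<le> length prog \<Longrightarrow> prog_vals g x (take j prog) = map val [0..<j]"
proof (induction j)
  case 0 then show ?case by (simp add: prog_vals_def)
next
  case (Suc j)
  then have j: "j < length prog" by simp
  have "take (Suc j) prog = take j prog @ [prog ! j]" using j by (simp add: take_Suc_conv_app_nth)
  then have "prog_vals g x (take (Suc j) prog) = map val [0..<j] @ [gate_val g x (map val [0..<j]) (prog!j)]"
    using Suc j by (simp add: prog_vals_snoc)
  also have "gate_val g x (map val [0..<j]) (prog!j) = gate_val g x (map val [0..<length prog]) (prog!j)"
  proof (rule gate_val_cong, rule ballI)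
    fix r assume "r \<in> gate_refs (prog ! j)"
    then have "r < j" using wf j by (auto simp: wf_prog_def)
    then show "map val [0..<j] ! r = map val [0..<length prog] ! r" using j by simp
  qed
  also have "\<dots> = val j" using loc j by simp
  finally show ?case by simp
qed

lemma prog_last:
  assumes "wf_prog prog" "\<forall>j<length prog. val j = gate_val g x (map val [0..<length prog]) (prog!j)"
    and "prog \<noteq> []"
  shows "last (prog_vals g x prog) = val (length prog - 1)"
proof -
  have "prog_vals g x prog = map val [0..<length prog]"
    using prog_vals_take[OF assms(1,2), of "length prog"] by simp
  then show ?thesis using assms(3) by (simp add: last_map)
qed

definition enc :: "nat \<Rightarrow> nat \<Rightarrow> nat \<Rightarrow> nat \<Rightarrow> nat" where
  "enc S b a c = (b * S + a) * S + c"

lemma enc_dec: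
  assumes "a < S" "c < S"
  shows "enc S b a c div (S * S) = b" "enc S b a c div S mod S = a" "enc S b a c mod S = c"
proof -
  have S: "0 < S" using assms by simp
  have e: "enc S b a c = b * (S * S) + (a * S + c)" by (simp add: enc_def algebra_simps)
  have l: "a * S + c < S * S"
  proof -
    have "a * S + c < a * S + S" using assms by simp
    also have "\<dots> = Suc a * S" by simp
    also have "\<dots> \<le> S * S" using assms by (intro mult_right_mono) auto
    finally show ?thesis .
  qed
  have SS: "S * S \<noteq> 0" using S by simp
  show "enc S b a c div (S * S) = b" unfolding e using l div_mult_self3[OF SS, of b "a * S + c"] by simp
  have e2: "enc S b a c = (b * S + a) * S + c" by (simp add: enc_def)
  show "enc S b a c mod S = c" unfolding e2 using assms by simp
  show "enc S b a c div S mod S = a" unfolding e2 using assms S by simp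
qed

lemma enc_blk_less:
  assumes "b' < b" "a' < S" "c' < S"
  shows "enc S b' a' c' < enc S b a c"
proof -
  have "enc S b' a' c' < (b' * S + a' + 1) * S" using assms by (simp add: enc_def)
  also have "\<dots> \<le> (b * S + a) * S"
  proof (rule mult_right_mono)
    have "b' * S + a' + 1 \<le> b' * S + S" using assms by simp
    also have "\<dots> = Suc b' * S" by simp
    also have "\<dots> \<le> b * S" using assms by (intro mult_right_mono) auto
    finally show "b' * S + a' + 1 \<le> b * S + a" by simp
  qed simp
  also have "\<dots> \<le> enc S b a c" by (simp add: enc_def)
  finally show ?thesis .
qed

lemma enc_row_less:
  assumes "a' < a" "c' < S"
  shows "enc S b a' c' < enc S b a c"
proof -
  have "enc S b a' c' < (b * S + a' + 1) * S" using assms by (simp add: enc_def)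
  also have "\<dots> \<le> (b * S + a) * S" using assms by (intro mult_right_mono) auto
  also have "\<dots> \<le> enc S b a c" by (simp add: enc_def)
  finally show ?thesis .
qed

lemma enc_col_less: "c' < c \<Longrightarrow> enc S b a c' < enc S b a c"
  by (simp add: enc_def)

lemma enc_bound:
  assumes "b < B" "a < S" "c < S"
  shows "enc S b a c < B * S * S"
proof -
  have "enc S b a c < enc S B 0 0" by (rule enc_blk_less) (use assms in auto)
  then show ?thesis by (simp add: enc_def)
qed

fun rv :: "nat \<Rightarrow> (nat \<Rightarrow> 'a::field) \<Rightarrow> nat \<Rightarrow> 'a" where
  "rv n qc 0 = 1"
| "rv n qc (Suc k) = (qc (Suc k) + (-1) * (\<Sum>i<n. if 1 \<le> i \<and> i < Suc k then rv n qc i * rv n qc (Suc k - i) else 0)) * (1/2)"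



definition SS :: "nat \<Rightarrow> nat" where "SS n = (n + 3) * (n + 3)"

lemma SS_facts: "0 < SS n" "n * n < SS n" "2 * n + 2 < SS n" "n < SS n" "3 < SS n" "2 * n < SS n"
  "1 < SS n" "2 < SS n" "2 * n + 1 < SS n" "2 * n - 1 < SS n"
  by (auto simp: SS_def algebra_simps)

definition cst :: "nat \<Rightarrow> 'a::field" where
  "cst c = (if c = 1 then 1 else if c = 2 then -1 else if c = 3 then 1/2 else 0)"

definition wt :: "nat \<Rightarrow> nat \<Rightarrow> nat \<Rightarrow> 'a::field_char_0" where
  "wt n k i = coeff (lag (2*n) i) k"

definition ridx :: "nat \<Rightarrow> nat \<Rightarrow> nat" where
  "ridx n k = (if k = 0 then enc (SS n) 0 0 1 else enc (SS n) 10 k (2*n+2))"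

definition zr :: "nat \<Rightarrow> nat" where "zr n = enc (SS n) 0 0 0"

definition Rgate :: "nat \<Rightarrow> nat \<Rightarrow> nat \<Rightarrow> 'a::zero gate" where
  "Rgate n k c = (let S = SS n in
     if c < 2*n then
       (if even c then (if 1 \<le> c div 2 \<and> c div 2 < k then GMul (ridx n (c div 2)) (ridx n (k - c div 2)) else GMul (zr n) (zr n))
        else (if c div 2 = 0 then GAdd (enc S 10 k 0) (zr n) else GAdd (enc S 10 k (c-2)) (enc S 10 k (c-1))))
     else if c = 2*n then GMul (enc S 0 0 2) (if n = 0 then zr n else enc S 10 k (2*n-1))
     else if c = 2*n+1 then GAdd (enc S 9 k (2*n)) (enc S 10 k (2*n))
     else if c = 2*n+2 then GMul (enc S 10 k (2*n+1)) (enc S 0 0 3)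
     else GConst 0)"

definition G :: "nat \<Rightarrow> nat \<Rightarrow> nat \<Rightarrow> nat \<Rightarrow> 'a::field_char_0 gate" where
  "G n b a c = (let S = SS n in
     if b = 0 then GConst (cst c)
     else if b = 1 then GConst (of_nat c)
     else if b = 2 then GConst (u0 n c)
     else if b = 3 then GConst (wt n a c)
     else if b = 4 then GVar c
     else if b = 5 then GMul (enc S 4 0 c) (enc S 1 0 a)
     else if b = 6 then GAdd (enc S 5 a c) (enc S 2 0 c)
     else if b = 7 then GOracle (map (enc S 6 a) [0..<n*n])
     else if b = 8 then GMul (enc S 3 a c) (enc S 7 c 0)
     else if b = 9 then (if c = 0 then GAdd (enc S 8 a 0) (zr n) else GAdd (enc S 9 a (c-1)) (enc S 8 a c))
     else if b = 10 then Rgate n a c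
     else GAdd (ridx n n) (zr n))"

definition Pp :: "nat \<Rightarrow> (nat \<Rightarrow> 'a) \<Rightarrow> 'a::comm_ring_1 poly" where
  "Pp n x = Ppoly n (u0 n) x"

definition Q :: "nat \<Rightarrow> (nat \<Rightarrow> 'a) \<Rightarrow> nat \<Rightarrow> 'a::field_char_0" where
  "Q n x i = poly (Pp n x) (of_nat i) ^ 2"

definition qc :: "nat \<Rightarrow> (nat \<Rightarrow> 'a) \<Rightarrow> nat \<Rightarrow> 'a::field_char_0" where
  "qc n x k = (\<Sum>i\<le>2*n. wt n k i * Q n x i)"

definition pv :: "nat \<Rightarrow> (nat \<Rightarrow> 'a) \<Rightarrow> nat \<Rightarrow> nat \<Rightarrow> 'a::field_char_0" where
  "pv n x k i = (if 1 \<le> i \<and> i < k then rv n (qc n x) i * rv n (qc n x) (k - i) else 0)"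

definition Sacc :: "nat \<Rightarrow> (nat \<Rightarrow> 'a) \<Rightarrow> nat \<Rightarrow> 'a::field_char_0" where
  "Sacc n x k = (\<Sum>i<n. pv n x k i)"

definition Rval :: "nat \<Rightarrow> (nat \<Rightarrow> 'a) \<Rightarrow> nat \<Rightarrow> nat \<Rightarrow> 'a::field_char_0" where
  "Rval n x k c = (if c < 2*n then (if even c then pv n x k (c div 2) else (\<Sum>i\<le>c div 2. pv n x k i))
     else if c = 2*n then (-1) * Sacc n x k
     else if c = 2*n+1 then qc n x k + (-1) * Sacc n x k
     else if c = 2*n+2 then (qc n x k + (-1) * Sacc n x k) * (1/2)
     else 0)"

definition V :: "nat \<Rightarrow> (nat \<Rightarrow> 'a) \<Rightarrow> nat \<Rightarrow> nat \<Rightarrow> nat \<Rightarrow> 'a::field_char_0" where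
  "V n x b a c = (
     if b = 0 then cst c
     else if b = 1 then of_nat c
     else if b = 2 then u0 n c
     else if b = 3 then wt n a c
     else if b = 4 then x c
     else if b = 5 then x c * of_nat a
     else if b = 6 then x c * of_nat a + u0 n c
     else if b = 7 then Q n x a
     else if b = 8 then wt n a c * Q n x c
     else if b = 9 then (\<Sum>i\<le>c. wt n a i * Q n x i)
     else if b = 10 then Rval n x a c
     else rv n (qc n x) n)"

definition valf :: "nat \<Rightarrow> (nat \<Rightarrow> 'a) \<Rightarrow> nat \<Rightarrow> 'a::field_char_0" where
  "valf n x j = V n x (j div (SS n * SS n)) (j div SS n mod SS n) (j mod SS n)"

definition LL :: "nat \<Rightarrow> nat" where "LL n = 12 * SS n * SS n"

lemma vs_enc:
  assumes "b < 12" "a < SS n" "c < SS n"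
  shows "map (valf n x) [0..<LL n] ! enc (SS n) b a c = V n x b a c"
proof -
  have "enc (SS n) b a c < LL n" unfolding LL_def by (rule enc_bound) (use assms in auto)
  then show ?thesis using enc_dec[OF assms(2,3)] by (simp add: valf_def)
qed

lemma ridx_val:
  assumes "k < SS n"
  shows "map (valf n x) [0..<LL n] ! ridx n k = rv n (qc n x) k"
proof (cases k)
  case 0 then show ?thesis using SS_facts[of n] by (simp add: ridx_def vs_enc V_def cst_def)
next
  case (Suc k')
  then show ?thesis using assms SS_facts[of n]
    by (simp add: ridx_def vs_enc V_def Rval_def Sacc_def pv_def)
qed



lemma idx_lt: "\<pi> \<in> Cn n \<Longrightarrow> i < n \<Longrightarrow> i * n + \<pi> i < n * n"
proof -
  assume p: "\<pi> \<in> Cn n" and i: "i < n"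
  have "\<pi> i < n" using p i perm_lt[of \<pi> n i] by (auto simp: Cn_def)
  then have "i * n + \<pi> i < Suc i * n" by simp
  also have "\<dots> \<le> n * n" using i by (intro mult_right_mono) auto
  finally show ?thesis .
qed

lemma HC_cong: "(\<And>k. k < n * n \<Longrightarrow> y k = y' k) \<Longrightarrow> HC n y = HC n y'"
  unfolding HC_Cn by (intro sum.cong prod.cong refl) (auto simp: idx_lt)

lemma Q_eq: "Q n x a = HCsq n (\<lambda>k. x k * of_nat a + u0 n k)"
  unfolding Q_def HCsq_def Pp_def poly_Ppoly by (simp add: algebra_simps)

abbreviation vsl where "vsl n x \<equiv> map (valf n x) [0..<LL n]"

lemma local_ok:
  fixes x :: "nat \<Rightarrow> 'a::field_char_0"
  assumes b: "b < 12" and a: "a < SS n" and c: "c < SS n"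
  shows "gate_refs (G n b a c :: 'a gate) \<subseteq> {..< enc (SS n) b a c}
     \<and> V n x b a c = gate_val (HCsq n) x (vsl n x) (G n b a c)"
proof -
  note F = SS_facts[of n]
  have S0: "0 < SS n" by (rule F(1))
  have dis: "b = 0 \<or> b = 1 \<or> b = 2 \<or> b = 3 \<or> b = 4 \<or> b = 5 \<or> b = 6 \<or> b = 7 \<or> b = 8 \<or> b = 9 \<or> b = 10 \<or> b = 11"
    using b by presburger
  consider "b = 0" | "b = 1" | "b = 2" | "b = 3" | "b = 4" | "b = 5" | "b = 6" | "b = 7" | "b = 8"
    | "b = 9" | "b = 10" | "b = 11" using dis by blast
  then show ?thesis
  proof cases
    case 1 then show ?thesis by (simp add: G_def Let_def V_def)
  next
    case 2 then show ?thesis by (simp add: G_def Let_def V_def)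
  next
    case 3 then show ?thesis by (simp add: G_def Let_def V_def)
  next
    case 4 then show ?thesis by (simp add: G_def Let_def V_def)
  next
    case 5 then show ?thesis by (simp add: G_def Let_def V_def)
  next
    case 6 then show ?thesis using a c S0
      by (simp add: G_def Let_def V_def vs_enc enc_blk_less)
  next
    case 7 then show ?thesis using a c S0
      by (simp add: G_def Let_def V_def vs_enc enc_blk_less)
  next
    case 8
    have r: "gate_refs (G n b a c :: 'a gate) \<subseteq> {..< enc (SS n) b a c}"
      using 8 a F by (auto simp: G_def Let_def enc_blk_less)
    have e: "(\<lambda>k. if k < n * n then vsl n x ! (map (enc (SS n) 6 a) [0..<n * n] ! k) else 0)
        = (\<lambda>k. if k < n * n then x k * of_nat a + u0 n k else 0)"
    proof
      fix k show "(if k < n * n then vsl n x ! (map (enc (SS n) 6 a) [0..<n * n] ! k) else 0)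
        = (if k < n * n then x k * of_nat a + u0 n k else 0)"
      proof (cases "k < n * n")
        case True
        then have "k < SS n" using F by linarith
        then show ?thesis using True a by (simp add: vs_enc V_def)
      qed simp
    qed
    have "gate_val (HCsq n) x (vsl n x) (G n b a c) = HCsq n (\<lambda>k. if k < n * n then x k * of_nat a + u0 n k else 0)"
      using 8 by (simp add: G_def Let_def e)
    also have "\<dots> = HCsq n (\<lambda>k. x k * of_nat a + u0 n k)"
      unfolding HCsq_def by (subst HC_cong[of n _ "\<lambda>k. x k * of_nat a + u0 n k"]) auto
    finally show ?thesis using r 8 by (simp add: V_def Q_eq)
  next
    case 9 then show ?thesis using a c S0
      by (simp add: G_def Let_def V_def vs_enc enc_blk_less)
  next
    case 10
    show ?thesis
    proof (cases c)
      case 0 then show ?thesis using 10 a S0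
        by (simp add: G_def Let_def V_def vs_enc enc_blk_less zr_def cst_def)
    next
      case (Suc c')
      then have "c' < SS n" using c by simp
      then show ?thesis using 10 a c S0 Suc
        by (simp add: G_def Let_def V_def vs_enc enc_blk_less enc_col_less zr_def cst_def)
    qed
  next
    case 11
    have GR: "(G n b a c :: 'a gate) = Rgate n a c" using 11 by (simp add: G_def)
    have VR: "V n x b a c = Rval n x a c" using 11 by (simp add: V_def)
    have RR: "gate_refs (Rgate n a c :: 'a gate) \<subseteq> {..< enc (SS n) 10 a c}
       \<and> Rval n x a c = gate_val (HCsq n) x (vsl n x) (Rgate n a c)"
    proof -
      consider "c < 2*n \<and> even c" | "c < 2*n \<and> odd c" | "c = 2*n" | "c = 2*n+1" | "c = 2*n+2" | "c > 2*n+2"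
        by linarith
      then show ?thesis
      proof cases
        case 1
        define i where "i = c div 2"
        have i: "c = 2 * i" "i < n" using 1 by (auto simp: i_def)
        show ?thesis
        proof (cases "1 \<le> i \<and> i < a")
          case True
          have ir: "ridx n i < enc (SS n) 10 a c" "ridx n (a - i) < enc (SS n) 10 a c"
            using True F by (auto simp: ridx_def intro!: enc_row_less)
          have lt: "i < SS n" "a - i < SS n" using True a by auto
          show ?thesis using True i ir ridx_val[OF lt(1), of x] ridx_val[OF lt(2), of x]
            by (simp add: Rgate_def Let_def Rval_def pv_def)
        next
          case False
          have "zr n < enc (SS n) 10 a c" unfolding zr_def by (rule enc_blk_less) (use F in auto)
          moreover have g: "(Rgate n a c :: 'a gate) = GMul (zr n) (zr n)"
            using False i by (auto simp: Rgate_def Let_def)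
          moreover have "Rval n x a c = 0" using False i by (auto simp: Rval_def pv_def)
          ultimately show ?thesis using F by (simp add: zr_def vs_enc V_def cst_def)
        qed
      next
        case 2
        define i where "i = c div 2"
        have i: "c = 2 * i + 1" "i < n" using 2 by (auto simp: i_def elim: oddE)
        show ?thesis
        proof (cases i)
          case 0
          have "zr n < enc (SS n) 10 a c" unfolding zr_def by (rule enc_blk_less) (use F in auto)
          then show ?thesis using 0 i a F
            by (simp add: Rgate_def Let_def Rval_def zr_def vs_enc V_def cst_def enc_col_less)
        next
          case (Suc i')
          have c2: "c - 2 = 2 * i' + 1" "c - 1 = 2 * Suc i'" using i Suc by auto
          have cs: "c - 2 < SS n" "c - 1 < SS n" using c by auto
          have "odd (c - 2)" "even (c - 1)" using c2 by auto
          moreover have "(c - 2) div 2 = i'" "(c - 1) div 2 = Suc i'" using c2 by auto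
          moreover have "c - 2 < 2 * n" "c - 1 < 2 * n" using i by auto
          ultimately show ?thesis using i Suc a cs
            by (simp add: Rgate_def Let_def Rval_def vs_enc V_def enc_col_less)
        qed
      next
        case 3
        show ?thesis
        proof (cases "n = 0")
          case True
          have "zr n < enc (SS n) 10 a c" unfolding zr_def by (rule enc_blk_less) (use F in auto)
          moreover have "enc (SS n) 0 0 2 < enc (SS n) 10 a c" by (rule enc_blk_less) (use F in auto)
          ultimately show ?thesis using 3 True F
            by (simp add: Rgate_def Let_def Rval_def Sacc_def zr_def vs_enc V_def cst_def)
        next
          case False
          have e: "odd (2*n - 1)" "(2*n-1) div 2 = n - 1" "2*n - 1 < 2*n" using False by auto
          have s: "(\<Sum>i\<le>n-1. pv n x a i) = Sacc n x a" unfolding Sacc_def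
            using False by (intro sum.cong) auto
          have "enc (SS n) 0 0 2 < enc (SS n) 10 a c" by (rule enc_blk_less) (use F in auto)
          then show ?thesis using 3 False F e s a
            by (simp add: Rgate_def Let_def Rval_def vs_enc V_def cst_def enc_col_less)
        qed
      next
        case 4
        have "enc (SS n) 9 a (2*n) < enc (SS n) 10 a c" by (rule enc_blk_less) (use F a in auto)
        then show ?thesis using 4 F a
          by (simp add: Rgate_def Let_def Rval_def vs_enc V_def enc_col_less qc_def)
      next
        case 5
        have "enc (SS n) 0 0 3 < enc (SS n) 10 a c" by (rule enc_blk_less) (use F in auto)
        then show ?thesis using 5 F a
          by (simp add: Rgate_def Let_def Rval_def vs_enc V_def enc_col_less cst_def)
      next
        case 6
        then show ?thesis by (simp add: Rgate_def Let_def Rval_def)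
      qed
    qed
    show ?thesis using RR 11 GR VR by simp
  next
    case 12
    have r: "gate_refs (G n b a c :: 'a gate) \<subseteq> {..< enc (SS n) b a c}"
      using 12 a c F by (auto simp: G_def Let_def ridx_def zr_def enc_blk_less)
    show ?thesis using r 12 F by (simp add: G_def Let_def V_def ridx_val vs_enc zr_def cst_def)
  qed
qed



definition prog :: "nat \<Rightarrow> 'a::field_char_0 gate list" where
  "prog n = map (\<lambda>j. G n (j div (SS n * SS n)) (j div SS n mod SS n) (j mod SS n)) [0..<LL n]"

lemma dec_props:
  assumes j: "j < LL n"
  shows "j div (SS n * SS n) < 12" "j div SS n mod SS n < SS n" "j mod SS n < SS n"
    "enc (SS n) (j div (SS n * SS n)) (j div SS n mod SS n) (j mod SS n) = j"
proof -
  have S: "0 < SS n" by (rule SS_facts(1))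
  show "j div (SS n * SS n) < 12" using j S by (simp add: LL_def div_less_iff_less_mult mult.assoc)
  show "j div SS n mod SS n < SS n" "j mod SS n < SS n" using S by auto
  have "j div (SS n * SS n) * SS n + j div SS n mod SS n = j div SS n"
    by (metis div_mult2_eq mult.commute div_mult_mod_eq)
  then show "enc (SS n) (j div (SS n * SS n)) (j div SS n mod SS n) (j mod SS n) = j"
    by (simp add: enc_def)
qed

lemma prog_wf: "wf_prog (prog n :: 'a::field_char_0 gate list)"
  unfolding wf_prog_def
proof (intro allI impI)
  fix k assume k: "k < length (prog n :: 'a gate list)"
  then have k': "k < LL n" by (simp add: prog_def)
  have "gate_refs (G n (k div (SS n * SS n)) (k div SS n mod SS n) (k mod SS n) :: 'a gate) \<subseteq> {..<k}"
    using local_ok[OF dec_props(1-3)[OF k'], of "\<lambda>_. 0::'a"] dec_props(4)[OF k'] by simp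
  then show "gate_refs ((prog n :: 'a gate list) ! k) \<subseteq> {..<k}" using k' by (simp add: prog_def)
qed

lemma prog_loc:
  fixes x :: "nat \<Rightarrow> 'a::field_char_0"
  shows "\<forall>j<length (prog n :: 'a gate list). valf n x j = gate_val (HCsq n) x (map (valf n x) [0..<length (prog n :: 'a gate list)]) (prog n ! j)"
proof (intro allI impI)
  fix j assume j: "j < length (prog n :: 'a gate list)"
  then have j': "j < LL n" by (simp add: prog_def)
  have "V n x (j div (SS n * SS n)) (j div SS n mod SS n) (j mod SS n)
     = gate_val (HCsq n) x (vsl n x) (G n (j div (SS n * SS n)) (j div SS n mod SS n) (j mod SS n))"
    using local_ok[OF dec_props(1-3)[OF j'], of x] by simp
  then show "valf n x j = gate_val (HCsq n) x (map (valf n x) [0..<length (prog n :: 'a gate list)]) (prog n ! j)"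
    using j' by (simp add: prog_def valf_def)
qed

lemma rv_coeff:
  fixes x :: "nat \<Rightarrow> 'a::field_char_0"
  shows "k \<le> n \<Longrightarrow> rv n (qc n x) k = coeff (Pp n x) k"
proof (induction k rule: less_induct)
  case (less k)
  show ?case
  proof (cases k)
    case 0
    then show ?thesis by (simp add: Pp_def coeff_Ppoly_0 HC_u0)
  next
    case (Suc k')
    let ?p = "Pp n x"
    have p0: "coeff ?p 0 = 1" by (simp add: Pp_def coeff_Ppoly_0 HC_u0)
    have dq: "degree (?p * ?p) \<le> 2 * n"
      using degree_mult_le[of ?p ?p] deg_Ppoly[of n "u0 n" x] by (simp add: Pp_def)
    have qk: "qc n x k = coeff (?p * ?p) k"
      unfolding interp[OF dq, of k] qc_def wt_def Q_def by (simp add: power2_eq_square)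
    have sk: "(\<Sum>i<n. if 1 \<le> i \<and> i < k then rv n (qc n x) i * rv n (qc n x) (k - i) else 0)
       = (\<Sum>i\<in>{1..<k}. coeff ?p i * coeff ?p (k - i))"
    proof -
      have "(\<Sum>i<n. if 1 \<le> i \<and> i < k then rv n (qc n x) i * rv n (qc n x) (k - i) else 0)
         = (\<Sum>i\<in>{..<n} \<inter> {i. 1 \<le> i \<and> i < k}. rv n (qc n x) i * rv n (qc n x) (k - i))"
        by (simp add: sum.inter_restrict)
      also have "{..<n} \<inter> {i. 1 \<le> i \<and> i < k} = {1..<k}" using less.prems by auto
      also have "(\<Sum>i\<in>{1..<k}. rv n (qc n x) i * rv n (qc n x) (k - i)) = (\<Sum>i\<in>{1..<k}. coeff ?p i * coeff ?p (k - i))"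
        by (intro sum.cong refl) (use less in auto)
      finally show ?thesis .
    qed
    have k1: "1 \<le> k" using Suc by simp
    have "rv n (qc n x) k = (qc n x k + (-1) * (\<Sum>i<n. if 1 \<le> i \<and> i < k then rv n (qc n x) i * rv n (qc n x) (k - i) else 0)) * (1/2)"
      unfolding Suc by (rule rv.simps(2))
    also have "\<dots> = (qc n x k - (\<Sum>i\<in>{1..<k}. coeff ?p i * coeff ?p (k - i))) / 2"
      unfolding sk by (simp add: field_simps)
    also have "\<dots> = coeff ?p k" using sqrt_rec[OF p0 k1] qk by simp
    finally show ?thesis .
  qed
qed

lemma prog_correct:
  fixes x :: "nat \<Rightarrow> 'a::field_char_0"
  shows "last (prog_vals (HCsq n) x (prog n :: 'a gate list)) = HC n x"
proof -
  have ne: "(prog n :: 'a gate list) \<noteq> []" using SS_facts(1)[of n] by (simp add: prog_def LL_def)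
  have "last (prog_vals (HCsq n) x (prog n :: 'a gate list)) = valf n x (length (prog n :: 'a gate list) - 1)"
    by (rule prog_last[OF prog_wf prog_loc ne])
  also have "length (prog n :: 'a gate list) - 1 = LL n - 1" by (simp add: prog_def)
  also have "valf n x (LL n - 1) = rv n (qc n x) n"
  proof -
    have l: "LL n - 1 < LL n" using SS_facts(1)[of n] by (simp add: LL_def)
    have "(LL n - 1) div (SS n * SS n) = 11"
    proof -
      have "LL n - 1 = 11 * (SS n * SS n) + (SS n * SS n - 1)" using SS_facts(1)[of n]
        by (simp add: LL_def algebra_simps)
      moreover have "SS n * SS n - 1 < SS n * SS n" using SS_facts(1)[of n] by simp
      moreover have "SS n * SS n \<noteq> 0" using SS_facts(1)[of n] by simp
      ultimately show ?thesis using div_mult_self3[of "SS n * SS n" 11 "SS n * SS n - 1"] by simp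
    qed
    then show ?thesis by (simp add: valf_def V_def)
  qed
  also have "\<dots> = coeff (Pp n x) n" by (rule rv_coeff) simp
  also have "\<dots> = HC n x" by (simp add: Pp_def coeff_Ppoly_n)
  finally show ?thesis .
qed

lemma LL_bound: "0 < n \<Longrightarrow> LL n \<le> (n + 1) ^ 12"
proof -
  assume n: "0 < n"
  have a: "n + 3 \<le> 2 * (n + 1)" using n by simp
  have b: "16 \<le> (n + 1) ^ 4"
  proof -
    have "(2::nat) ^ 4 \<le> (n + 1) ^ 4" using n by (intro power_mono) auto
    then show ?thesis by simp
  qed
  have "LL n = 12 * (n + 3) ^ 4" by (simp add: LL_def SS_def power4_eq_xxxx algebra_simps)
  also have "\<dots> \<le> 12 * (2 * (n + 1)) ^ 4" using a by (intro mult_left_mono power_mono) auto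
  also have "\<dots> = 192 * (n + 1) ^ 4" unfolding power_mult_distrib by simp
  also have "\<dots> \<le> 16 * 16 * (n + 1) ^ 4" by simp
  also have "\<dots> \<le> (n + 1) ^ 4 * (n + 1) ^ 4 * (n + 1) ^ 4"
    using b by (intro mult_right_mono mult_mono) auto
  also have "\<dots> = (n + 1) ^ 12" by (simp flip: power_add)
  finally show ?thesis .
qed

lemma len_prog: "length (prog n) = LL n"
  by (simp add: prog_def)

lemma LL_bound': "0 < n \<Longrightarrow> LL n \<le> Suc n ^ 12"
  using LL_bound by simp

lemma HC_creduces: "c_reduces (HC :: nat \<Rightarrow> 'a::field_char_0 pfun) HCsq"
  unfolding c_reduces_def
proof (intro exI conjI allI)
  show "poly_bounded (\<lambda>n. n)" unfolding poly_bounded_def by (rule exI[of _ 1]) simp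
  show "poly_bounded (\<lambda>n. if n = 0 then 1 else LL n)" unfolding poly_bounded_def
    by (rule exI[of _ 12]) (auto simp: LL_bound')
  fix n
  show "oracle_cost_le (HCsq n) (HC n :: 'a pfun) (if n = 0 then 1 else LL n)"
  proof (cases "n = 0")
    case True
    have "wf_prog [GConst (1::'a)]" by (simp add: wf_prog_def)
    moreover have "\<forall>x. last (prog_vals (HCsq n) x [GConst (1::'a)]) = HC n x"
      using True by (simp add: prog_vals_def HC_0)
    ultimately show ?thesis using True unfolding oracle_cost_le_def
      by (intro exI[of _ "[GConst (1::'a)]"]) auto
  next
    case False
    have ne: "(prog n :: 'a gate list) \<noteq> []" using SS_facts(1)[of n] by (simp add: prog_def LL_def)
    show ?thesis using False unfolding oracle_cost_le_def
      by (intro exI[of _ "prog n :: 'a gate list"]) (simp add: ne prog_wf prog_correct len_prog)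
  qed
qed

theorem main_generic: "(HCsq :: nat \<Rightarrow> 'a::field_char_0 pfun) \<in> VNPC_c"
  unfolding VNPC_c_def VNP_def using HCsq_pfamily HCsq_preduces HC_creduces by blast

theorem corollary1:
  shows "(HCsq :: nat \<Rightarrow> rat pfun) \<in> VNPC_c \<and>
         (HCsq :: nat \<Rightarrow> real pfun) \<in> VNPC_c \<and>
         (HCsq :: nat \<Rightarrow> complex pfun) \<in> VNPC_c"
  by (intro conjI main_generic)


end
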